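(* For every topological group $X$ endowed with its left coarse structure, $\mathcal D_<(X)\subset\mathcal S(X)$.
   Context: A coarse space is a pair $(X,\mathcal E)$ of a set and a family of entourages $\varepsilon\subset X\times X$ that contain the diagonal, are symmetric, are (up to containment) closed under composition $\delta\circ\varepsilon=\{(x,z):\exists y\,(x,y)\in\varepsilon,(y,z)\in\delta\}$, and such that any symmetric $\delta$ with $\Delta_X\subset\delta\subset\varepsilon\in\mathcal E$ is in $\mathcal E$. The left coarse structure of a topological group $G$ is the coarse structure with base $\{\{(x,y)\in G^2:x\in yK\}\}$, $K=K^{-1}$ ranging over compact symmetric subsets of $G$ containing the identity. Subsets carry the subspace coarse structure $\{\varepsilon\cap A^2\}$. $B(x,\varepsilon)=\{y:(x,y)\in\varepsilon\}$, $B(A,\varepsilon)=\bigcup_{a\in A}B(a,\varepsilon)$, $\operatorname{mesh}(\mathcal U)=\bigcup_{U\in\mathcal U}U\times U$. $\operatorname{asdim}(X)$ is the least $n\in\omega$ such that for every $\varepsilon\in\mathcal E$ there is a cover $\mathcal U$ of $X$ with $\operatorname{mesh}(\mathcal U)\subset\delta$ for some $\delta\in\mathcal E$ and each $B(x,\varepsilon)$ meeting at most $n+1$ members of $\mathcal U$ ($\infty$ if none). $A$ is large if $B(A,\varepsilon)=X$ for some $\varepsilon\in\mathcal E$; small if $L\setminus A$ is large for every large $L$. $\mathcal S(X)$ is the family of small subsets, $\mathcal D_<(X)=\{A\subset X:\operatorname{asdim}(A)<\operatorname{asdim}(X)\}$. *)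

theory Defs
  imports "HOL-Analysis.Analysis" "HOL-Algebra.Group"
begin

definition topological_group :: "('a, 'b) monoid_scheme \<Rightarrow> 'a topology \<Rightarrow> bool" where
  "topological_group G T \<longleftrightarrow> group G \<and> topspace T = carrier G \<and>
     continuous_map (prod_topology T T) T (\<lambda>(x, y). x \<otimes>\<^bsub>G\<^esub> y) \<and>
     continuous_map T T (\<lambda>x. inv\<^bsub>G\<^esub> x)"

definition ball_c :: "'a \<Rightarrow> ('a \<times> 'a) set \<Rightarrow> 'a set" where
  "ball_c x \<epsilon> = {y. (x, y) \<in> \<epsilon>}"

definition ball_set :: "'a set \<Rightarrow> ('a \<times> 'a) set \<Rightarrow> 'a set" where
  "ball_set A \<epsilon> = (\<Union>a\<in>A. ball_c a \<epsilon>)"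

definition mesh :: "'a set set \<Rightarrow> ('a \<times> 'a) set" where
  "mesh \<U> = (\<Union>U\<in>\<U>. U \<times> U)"

definition left_base :: "('a, 'b) monoid_scheme \<Rightarrow> 'a set \<Rightarrow> ('a \<times> 'a) set" where
  "left_base G K = {(x, y). x \<in> carrier G \<and> y \<in> carrier G \<and> (\<exists>k\<in>K. x = y \<otimes>\<^bsub>G\<^esub> k)}"

definition left_coarse :: "('a, 'b) monoid_scheme \<Rightarrow> 'a topology \<Rightarrow> ('a \<times> 'a) set set" where
  "left_coarse G T = {\<epsilon>. Id_on (carrier G) \<subseteq> \<epsilon> \<and> sym \<epsilon> \<and>
     (\<exists>K. K \<subseteq> carrier G \<and> compactin T K \<and> (\<lambda>x. inv\<^bsub>G\<^esub> x) ` K = K \<and>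
          \<one>\<^bsub>G\<^esub> \<in> K \<and> \<epsilon> \<subseteq> left_base G K)}"

definition subspace_coarse :: "('a \<times> 'a) set set \<Rightarrow> 'a set \<Rightarrow> ('a \<times> 'a) set set" where
  "subspace_coarse E A = {\<epsilon> \<inter> (A \<times> A) | \<epsilon>. \<epsilon> \<in> E}"

definition asdim_le :: "'a set \<Rightarrow> ('a \<times> 'a) set set \<Rightarrow> nat \<Rightarrow> bool" where
  "asdim_le X E n \<longleftrightarrow> (\<forall>\<epsilon>\<in>E. \<exists>\<U>. \<U> \<subseteq> Pow X \<and> \<Union>\<U> = X \<and>
      (\<exists>\<delta>\<in>E. mesh \<U> \<subseteq> \<delta>) \<and>
      (\<forall>x\<in>X. finite {U\<in>\<U>. ball_c x \<epsilon> \<inter> U \<noteq> {}} \<and>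
              card {U\<in>\<U>. ball_c x \<epsilon> \<inter> U \<noteq> {}} \<le> n + 1))"

definition asdim :: "'a set \<Rightarrow> ('a \<times> 'a) set set \<Rightarrow> enat" where
  "asdim X E = (if \<exists>n. asdim_le X E n then enat (LEAST n. asdim_le X E n) else \<infinity>)"

definition large :: "'a set \<Rightarrow> ('a \<times> 'a) set set \<Rightarrow> 'a set \<Rightarrow> bool" where
  "large X E A \<longleftrightarrow> (\<exists>\<epsilon>\<in>E. ball_set A \<epsilon> = X)"

definition small_sets :: "'a set \<Rightarrow> ('a \<times> 'a) set set \<Rightarrow> 'a set set" where
  "small_sets X E = {A. A \<subseteq> X \<and> (\<forall>L. L \<subseteq> X \<longrightarrow> large X E L \<longrightarrow> large X E (L - A))}"

definition lower_dim_sets :: "'a set \<Rightarrow> ('a \<times> 'a) set set \<Rightarrow> 'a set set" where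
  "lower_dim_sets X E = {A. A \<subseteq> X \<and> asdim A (subspace_coarse E A) < asdim X E}"

end

theory Submission
  imports Defs
begin



definition fip :: "('i \<Rightarrow> bool) set \<Rightarrow> bool" where
  "fip Q \<longleftrightarrow> (\<forall>Ps. finite Ps \<and> Ps \<subseteq> Q \<longrightarrow> (\<exists>x. \<forall>P\<in>Ps. P x))"

lemma ultra_exists:
  fixes F :: "'i filter"
  assumes F: "F \<noteq> bot"
  shows "\<exists>M. (\<forall>P. eventually P F \<longrightarrow> P \<in> M) \<and> fip M \<and> (\<forall>P. P \<in> M \<or> (\<lambda>x. \<not> P x) \<in> M)"
proof -
  define Q0 where "Q0 = {P. eventually P F}"
  define \<A> where "\<A> = {Q. Q0 \<subseteq> Q \<and> fip Q}"
  have Q0A: "Q0 \<in> \<A>"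
  proof -
    have "\<exists>x. \<forall>P\<in>Ps. P x" if "finite Ps" "Ps \<subseteq> Q0" for Ps
    proof -
      have "eventually (\<lambda>x. \<forall>P\<in>Ps. P x) F"
        by (rule eventually_ball_finite) (use that in \<open>auto simp: Q0_def\<close>)
      then show ?thesis using F eventually_happens by blast
    qed
    then show ?thesis by (auto simp: \<A>_def fip_def)
  qed
  have "\<exists>M\<in>\<A>. \<forall>X\<in>\<A>. M \<subseteq> X \<longrightarrow> X = M"
  proof (rule Zorn_Lemma2, intro ballI)
    fix C assume C: "C \<in> chains \<A>"
    show "\<exists>U\<in>\<A>. \<forall>X\<in>C. X \<subseteq> U"
    proof (cases "C = {}")
      case True then show ?thesis using Q0A by auto
    next
      case False
      have CA: "C \<subseteq> \<A>" and ch: "subset.chain \<A> C" using C by (auto simp: chains_alt_def subset.chain_def)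
      have "\<Union>C \<in> \<A>"
        unfolding \<A>_def fip_def
      proof (intro CollectI conjI allI impI)
        show "Q0 \<subseteq> \<Union>C" using False CA by (auto simp: \<A>_def)
      next
        fix Ps assume Ps: "finite Ps \<and> Ps \<subseteq> \<Union>C"
        then obtain B where "B \<in> C" "Ps \<subseteq> B"
          using finite_subset_Union_chain[OF _ _ False ch] by metis
        then show "\<exists>x. \<forall>P\<in>Ps. P x" using CA Ps by (auto simp: \<A>_def fip_def)
      qed
      then show ?thesis by blast
    qed
  qed
  then obtain M where MA: "M \<in> \<A>" and max: "\<And>X. X \<in> \<A> \<Longrightarrow> M \<subseteq> X \<Longrightarrow> X = M" by blast
  have ultra: "P \<in> M \<or> (\<lambda>x. \<not> P x) \<in> M" for P
  proof (rule ccontr)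
    assume n: "\<not> (P \<in> M \<or> (\<lambda>x. \<not> P x) \<in> M)"
    have bad: "\<exists>Ps. finite Ps \<and> Ps \<subseteq> M \<and> \<not> (\<exists>x. R x \<and> (\<forall>P\<in>Ps. P x))"
      if "R \<notin> M" for R
    proof (rule ccontr)
      assume nb: "\<not> ?thesis"
      have "insert R M \<in> \<A>"
        unfolding \<A>_def fip_def
      proof (intro CollectI conjI allI impI)
        show "Q0 \<subseteq> insert R M" using MA by (auto simp: \<A>_def)
      next
        fix Ps assume Ps: "finite Ps \<and> Ps \<subseteq> insert R M"
        then have "finite (Ps - {R})" "Ps - {R} \<subseteq> M" by auto
        then have "\<exists>x. R x \<and> (\<forall>P\<in>Ps - {R}. P x)"
          using nb by (metis (no_types, lifting))
        then obtain x where "R x" "\<forall>P\<in>Ps - {R}. P x" by (elim exE conjE)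
        then show "\<exists>x. \<forall>P\<in>Ps. P x" by auto
      qed
      then have "insert R M = M" using max by blast
      then show False using that by blast
    qed
    obtain Ps1 where 1: "finite Ps1" "Ps1 \<subseteq> M" "\<not> (\<exists>x. P x \<and> (\<forall>P\<in>Ps1. P x))"
      using bad[of P] n by (metis (no_types, lifting))
    obtain Ps2 where 2: "finite Ps2" "Ps2 \<subseteq> M" "\<not> (\<exists>x. \<not> P x \<and> (\<forall>P\<in>Ps2. P x))"
      using bad[of "\<lambda>x. \<not> P x"] n by (metis (no_types, lifting))
    have "\<exists>x. \<forall>Q\<in>Ps1 \<union> Ps2. Q x" using MA 1 2 by (auto simp: \<A>_def fip_def)
    then show False using 1 2 by blast
  qed
  show ?thesis using MA ultra by (auto simp: \<A>_def Q0_def)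
qed


lemma fipD: "fip M \<Longrightarrow> finite Ps \<Longrightarrow> Ps \<subseteq> M \<Longrightarrow> \<exists>x. \<forall>P\<in>Ps. P x"
  by (simp add: fip_def)

lemma uf_props:
  assumes fip: "fip M" and ultra: "\<forall>P. P \<in> M \<or> (\<lambda>x. \<not> P x) \<in> M"
  shows uf_ex: "\<And>P. P \<in> M \<Longrightarrow> \<exists>x. P x"
    and uf_conj: "\<And>P Q. P \<in> M \<Longrightarrow> Q \<in> M \<Longrightarrow> (\<lambda>x. P x \<and> Q x) \<in> M"
    and uf_mono: "\<And>P Q. P \<in> M \<Longrightarrow> (\<And>x. P x \<Longrightarrow> Q x) \<Longrightarrow> Q \<in> M"
    and uf_True: "(\<lambda>x. True) \<in> M"
proof -
  show ex: "\<exists>x. P x" if "P \<in> M" for P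
    using fipD[OF fip, of "{P}"] that by simp
  show "(\<lambda>x. P x \<and> Q x) \<in> M" if "P \<in> M" "Q \<in> M" for P Q
  proof (rule ccontr)
    assume a: "(\<lambda>x. P x \<and> Q x) \<notin> M"
    have "(\<lambda>x. \<not> (P x \<and> Q x)) \<in> M" using ultra[THEN spec, of "\<lambda>x. P x \<and> Q x"] a by simp
    then have "\<exists>x. \<forall>R\<in>{P, Q, (\<lambda>x. \<not> (P x \<and> Q x))}. R x"
      using that by (intro fipD[OF fip]) auto
    then show False by auto
  qed
  show "Q \<in> M" if "P \<in> M" "\<And>x. P x \<Longrightarrow> Q x" for P Q
  proof (rule ccontr)
    assume a: "Q \<notin> M"
    have "(\<lambda>x. \<not> Q x) \<in> M" using ultra[THEN spec, of Q] a by simp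
    then have "\<exists>x. \<forall>R\<in>{P, (\<lambda>x. \<not> Q x)}. R x"
      using that by (intro fipD[OF fip]) auto
    then show False using that by auto
  qed
  show "(\<lambda>x. True) \<in> M"
  proof (rule ccontr)
    assume a: "(\<lambda>x. True) \<notin> M"
    have "(\<lambda>x. \<not> True) \<in> M" using ultra[THEN spec, of "\<lambda>x. True"] a by simp
    then show False using ex by blast
  qed
qed

lemma uf_ball_finite:
  assumes fip: "fip M" and ultra: "\<forall>P. P \<in> M \<or> (\<lambda>x. \<not> P x) \<in> M"
    and "finite S" and "\<And>s. s \<in> S \<Longrightarrow> (\<lambda>x. P s x) \<in> M"
  shows "(\<lambda>x. \<forall>s\<in>S. P s x) \<in> M"
  using assms(3,4)
proof (induction S rule: finite_induct)
  case empty
  then show ?case using uf_True[OF fip ultra] by simp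
next
  case (insert s S)
  have "(\<lambda>x. P s x \<and> (\<forall>s\<in>S. P s x)) \<in> M"
    using insert uf_conj[OF fip ultra] by simp
  then show ?case by simp
qed



definition symc :: "('a, 'b) monoid_scheme \<Rightarrow> 'a set \<Rightarrow> 'a set" where
  "symc G M = M \<union> (\<lambda>x. inv\<^bsub>G\<^esub> x) ` M \<union> {\<one>\<^bsub>G\<^esub>}"

definition pset :: "('a, 'b) monoid_scheme \<Rightarrow> 'a set \<Rightarrow> 'a set \<Rightarrow> 'a set" where
  "pset G M N = (\<lambda>(x, y). x \<otimes>\<^bsub>G\<^esub> y) ` (M \<times> N)"

context group
begin

lemma lb_iff: "(x, y) \<in> left_base G K \<longleftrightarrow> x \<in> carrier G \<and> y \<in> carrier G \<and> (\<exists>k\<in>K. x = y \<otimes> k)"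
  by (simp add: left_base_def)

lemma lb_sub: "left_base G K \<subseteq> carrier G \<times> carrier G"
  by (auto simp: left_base_def)

lemma lb_in:
  assumes "K \<subseteq> carrier G" "compactin T K" "(\<lambda>x. inv x) ` K = K" "\<one> \<in> K"
  shows "left_base G K \<in> left_coarse G T"
proof -
  have "Id_on (carrier G) \<subseteq> left_base G K"
    using assms(4) by (force simp: left_base_def Id_on_def)
  moreover have "sym (left_base G K)"
  proof (rule symI)
    fix x y assume "(x, y) \<in> left_base G K"
    then obtain k where k: "x \<in> carrier G" "y \<in> carrier G" "k \<in> K" "x = y \<otimes> k" by (auto simp: left_base_def)
    have kc: "k \<in> carrier G" using k assms(1) by auto
    have "inv k \<in> K" using k(3) assms(3) by blast
    moreover have "y = x \<otimes> inv k" using k kc by (simp add: m_assoc)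
    ultimately show "(y, x) \<in> left_base G K" using k by (auto simp: left_base_def)
  qed
  ultimately show ?thesis using assms by (auto simp: left_coarse_def)
qed

lemma symc_props:
  assumes tg: "topological_group G T" and M: "M \<subseteq> carrier G" "compactin T M"
  shows "symc G M \<subseteq> carrier G" "compactin T (symc G M)" "(\<lambda>x. inv x) ` symc G M = symc G M"
    "\<one> \<in> symc G M" "M \<subseteq> symc G M"
proof -
  show "symc G M \<subseteq> carrier G" using M by (auto simp: symc_def)
  have ci: "continuous_map T T (\<lambda>x. inv x)" and tp: "topspace T = carrier G"
    using tg by (auto simp: topological_group_def)
  have "compactin T ((\<lambda>x. inv x) ` M)" by (rule image_compactin[OF M(2) ci])
  then show "compactin T (symc G M)" unfolding symc_def
    using M tp by (intro compactin_Un) auto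
  show "(\<lambda>x. inv x) ` symc G M = symc G M"
  proof
    show "(\<lambda>x. inv x) ` symc G M \<subseteq> symc G M" using M by (auto simp: symc_def)
    show "symc G M \<subseteq> (\<lambda>x. inv x) ` symc G M"
    proof
      fix x assume x: "x \<in> symc G M"
      have "x \<in> carrier G" using x M by (auto simp: symc_def)
      moreover have "inv x \<in> symc G M" using x M by (auto simp: symc_def)
      ultimately show "x \<in> (\<lambda>x. inv x) ` symc G M" by (metis image_eqI inv_inv)
    qed
  qed
  show "\<one> \<in> symc G M" "M \<subseteq> symc G M" by (auto simp: symc_def)
qed

lemma symc_lb:
  assumes tg: "topological_group G T" and M: "M \<subseteq> carrier G" "compactin T M"
  shows "left_base G (symc G M) \<in> left_coarse G T"
  using symc_props[OF assms] by (intro lb_in) auto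

lemma pset_props:
  assumes tg: "topological_group G T" and M: "M \<subseteq> carrier G" "compactin T M"
    and N: "N \<subseteq> carrier G" "compactin T N"
  shows "pset G M N \<subseteq> carrier G" "compactin T (pset G M N)"
proof -
  show "pset G M N \<subseteq> carrier G" using M N by (auto simp: pset_def)
  have cm: "continuous_map (prod_topology T T) T (\<lambda>(x, y). x \<otimes> y)"
    using tg by (auto simp: topological_group_def)
  have "compactin (prod_topology T T) (M \<times> N)" using M N by (simp add: compactin_Times)
  then show "compactin T (pset G M N)" unfolding pset_def by (rule image_compactin[OF _ cm])
qed

lemma pset_mem: "x \<in> M \<Longrightarrow> y \<in> N \<Longrightarrow> x \<otimes> y \<in> pset G M N"
  by (force simp: pset_def)

lemma left_coarse_E:
  assumes "\<epsilon> \<in> left_coarse G T"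
  obtains K where "K \<subseteq> carrier G" "compactin T K" "(\<lambda>x. inv x) ` K = K" "\<one> \<in> K" "\<epsilon> \<subseteq> left_base G K"
  using assms by (auto simp: left_coarse_def)

end


context group
begin

lemma thick:
  assumes tg: "topological_group G T"
    and K0: "K0 \<subseteq> carrier G" "compactin T K0" "(\<lambda>x. inv x) ` K0 = K0"
    and cov: "\<And>y. y \<in> carrier G \<Longrightarrow> \<exists>l\<in>L. \<exists>k\<in>K0. l = y \<otimes> k"
    and LG: "L \<subseteq> carrier G"
    and nl: "\<not> large (carrier G) (left_coarse G T) (L - A)"
    and F: "finite F" "F \<subseteq> carrier G"
  shows "\<exists>x\<in>carrier G. \<forall>f\<in>F. \<exists>a\<in>A. \<exists>k\<in>K0. x \<otimes> f = a \<otimes> k"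
proof -
  have tp: "topspace T = carrier G" using tg by (simp add: topological_group_def)
  have Fc: "compactin T F" using F tp by (intro finite_imp_compactin) auto
  define M where "M = symc G (pset G F K0)"
  have pp: "pset G F K0 \<subseteq> carrier G" "compactin T (pset G F K0)"
    using pset_props[OF tg F(2) Fc K0(1,2)] by auto
  have eE: "left_base G M \<in> left_coarse G T" unfolding M_def by (rule symc_lb[OF tg pp])
  have "ball_set (L - A) (left_base G M) \<noteq> carrier G" using nl eE by (auto simp: large_def)
  moreover have "ball_set (L - A) (left_base G M) \<subseteq> carrier G"
    by (auto simp: ball_set_def ball_c_def left_base_def)
  ultimately obtain x where x: "x \<in> carrier G" "x \<notin> ball_set (L - A) (left_base G M)" by blast
  have "\<exists>a\<in>A. \<exists>k\<in>K0. x \<otimes> f = a \<otimes> k" if f: "f \<in> F" for f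
  proof -
    have fc: "f \<in> carrier G" using f F by auto
    obtain l k where l: "l \<in> L" "k \<in> K0" "l = x \<otimes> f \<otimes> k" using cov[of "x \<otimes> f"] x fc by blast
    have kc: "k \<in> carrier G" using l K0 by auto
    have "f \<otimes> k \<in> M" using symc_props(5)[OF tg pp] pset_mem[OF f l(2)] unfolding M_def by blast
    moreover have "l = x \<otimes> (f \<otimes> k)" using l x fc kc by (simp add: m_assoc)
    ultimately have "(l, x) \<in> left_base G M" using x l LG kc fc by (auto simp: left_base_def)
    then have "l \<in> A" using x l by (auto simp: ball_set_def ball_c_def)
    moreover have "inv k \<in> K0" using l(2) K0(3) by blast
    moreover have "x \<otimes> f = l \<otimes> inv k" using l x fc kc by (simp add: m_assoc)
    ultimately show ?thesis by blast
  qed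
  then show ?thesis using x by blast
qed


lemma canc1 [simp]: "x \<in> carrier G \<Longrightarrow> y \<in> carrier G \<Longrightarrow> x \<otimes> y \<otimes> inv y = x"
  by (simp add: m_assoc)
lemma canc2 [simp]: "x \<in> carrier G \<Longrightarrow> y \<in> carrier G \<Longrightarrow> x \<otimes> inv y \<otimes> y = x"
  by (simp add: m_assoc)

definition tr :: "'a set \<Rightarrow> 'a \<Rightarrow> 'a set \<Rightarrow> 'a set" where
  "tr K0 x W = (\<lambda>(u, k). inv x \<otimes> (u \<otimes> k)) ` (W \<times> K0)"

lemma P1:
  assumes K0: "K0 \<subseteq> carrier G" "(\<lambda>x. inv x) ` K0 = K0"
    and W: "\<Union>\<W> = A" "A \<subseteq> carrier G" and x: "x \<in> carrier G"
    and hx: "\<forall>f\<in>F. \<exists>a\<in>A. \<exists>k\<in>K0. x \<otimes> f = a \<otimes> k" and FG: "F \<subseteq> carrier G" and f: "f \<in> F"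
  shows "\<exists>W\<in>\<W>. f \<in> tr K0 x W"
proof -
  obtain a k where a: "a \<in> A" "k \<in> K0" "x \<otimes> f = a \<otimes> k" using hx f by blast
  obtain W where Wm: "W \<in> \<W>" "a \<in> W" using W a by blast
  have c: "a \<in> carrier G" "k \<in> carrier G" "f \<in> carrier G" using a W K0 FG f by auto
  have "f = inv x \<otimes> (a \<otimes> k)"
  proof -
    have "inv x \<otimes> (a \<otimes> k) = inv x \<otimes> (x \<otimes> f)" using a c by simp
    also have "\<dots> = f" using c x by (simp add: m_assoc[symmetric])
    finally show ?thesis by simp
  qed
  then have "f \<in> tr K0 x W" unfolding tr_def using Wm a by force
  then show ?thesis using Wm by blast
qed

lemma P2:
  assumes K0: "K0 \<subseteq> carrier G" "(\<lambda>x. inv x) ` K0 = K0"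
    and W: "\<W> \<subseteq> Pow A" "A \<subseteq> carrier G" and x: "x \<in> carrier G"
    and mesh: "mesh \<W> \<subseteq> left_base G D" and DG: "D \<subseteq> carrier G"
    and Wm: "W \<in> \<W>" and y: "y \<in> tr K0 x W" and z: "z \<in> tr K0 x W"
  shows "(y, z) \<in> left_base G (pset G (pset G K0 D) K0)"
proof -
  obtain u k where u: "u \<in> W" "k \<in> K0" "y = inv x \<otimes> (u \<otimes> k)" using y by (auto simp: tr_def)
  obtain u' k' where u': "u' \<in> W" "k' \<in> K0" "z = inv x \<otimes> (u' \<otimes> k')" using z by (auto simp: tr_def)
  have "(u, u') \<in> mesh \<W>" using u u' Wm by (auto simp: mesh_def)
  then obtain d where d: "d \<in> D" "u = u' \<otimes> d" "u \<in> carrier G" "u' \<in> carrier G" using mesh by (auto simp: left_base_def)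
  have dc: "d \<in> carrier G" using d DG by auto
  have kc: "k \<in> carrier G" "k' \<in> carrier G" using u u' K0 by auto
  have ik: "inv k' \<in> K0" using u'(2) K0(2) by blast
  have eq: "y = z \<otimes> (inv k' \<otimes> d \<otimes> k)"
    using u u' d dc kc x by (simp add: m_assoc[symmetric])
  have "inv k' \<otimes> d \<otimes> k \<in> pset G (pset G K0 D) K0"
    by (intro pset_mem ik d(1) u(2))
  moreover have "y \<in> carrier G" "z \<in> carrier G" using u u' d kc x by auto
  ultimately show ?thesis using eq by (auto simp: left_base_def)
qed

lemma P3:
  assumes K0: "K0 \<subseteq> carrier G" "(\<lambda>x. inv x) ` K0 = K0"
    and W: "\<W> \<subseteq> Pow A" "A \<subseteq> carrier G" and x: "x \<in> carrier G"
    and hx: "\<forall>f\<in>F. \<exists>a\<in>A. \<exists>k\<in>K0. x \<otimes> f = a \<otimes> k" and FG: "F \<subseteq> carrier G" and p: "p \<in> F"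
    and eps: "\<epsilon> \<subseteq> left_base G K1" "K1 \<subseteq> carrier G"
    and K2: "pset G (pset G K0 K1) K0 \<subseteq> K2"
    and mult: "\<forall>a\<in>A. finite {W\<in>\<W>. ball_c a (left_base G K2 \<inter> A \<times> A) \<inter> W \<noteq> {}} \<and>
                 card {W\<in>\<W>. ball_c a (left_base G K2 \<inter> A \<times> A) \<inter> W \<noteq> {}} \<le> m + 1"
  shows "finite {V\<in>tr K0 x ` \<W>. ball_c p \<epsilon> \<inter> V \<noteq> {}} \<and> card {V\<in>tr K0 x ` \<W>. ball_c p \<epsilon> \<inter> V \<noteq> {}} \<le> m + 1"
proof -
  obtain a k0 where a: "a \<in> A" "k0 \<in> K0" "x \<otimes> p = a \<otimes> k0" using hx p by blast
  define S where "S = {W\<in>\<W>. ball_c a (left_base G K2 \<inter> A \<times> A) \<inter> W \<noteq> {}}"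
  have sub: "{V\<in>tr K0 x ` \<W>. ball_c p \<epsilon> \<inter> V \<noteq> {}} \<subseteq> tr K0 x ` S"
  proof
    fix V assume "V \<in> {V\<in>tr K0 x ` \<W>. ball_c p \<epsilon> \<inter> V \<noteq> {}}"
    then obtain W y where Wm: "W \<in> \<W>" "V = tr K0 x W" "y \<in> ball_c p \<epsilon>" "y \<in> V" by blast
    obtain w k where w: "w \<in> W" "k \<in> K0" "y = inv x \<otimes> (w \<otimes> k)" using Wm by (auto simp: tr_def)
    have "(p, y) \<in> left_base G K1" using Wm eps by (auto simp: ball_c_def)
    then obtain k1 where k1: "k1 \<in> K1" "p = y \<otimes> k1" "p \<in> carrier G" "y \<in> carrier G" by (auto simp: left_base_def)
    have wA: "w \<in> A" using w Wm W by auto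
    have c: "w \<in> carrier G" "k \<in> carrier G" "k1 \<in> carrier G" "k0 \<in> carrier G" "a \<in> carrier G"
      using wA W w K0 k1 eps a by auto
    have "a = x \<otimes> p \<otimes> inv k0" using a c x k1 by simp
    also have "\<dots> = w \<otimes> (k \<otimes> k1 \<otimes> inv k0)"
      using w k1 c x by (simp add: m_assoc[symmetric])
    finally have aeq: "a = w \<otimes> (k \<otimes> k1 \<otimes> inv k0)" .
    have "inv k0 \<in> K0" using a(2) K0(2) by blast
    then have "k \<otimes> k1 \<otimes> inv k0 \<in> K2" using K2 pset_mem[OF pset_mem[OF w(2) k1(1)]] by blast
    then have "(a, w) \<in> left_base G K2 \<inter> A \<times> A" using aeq a wA c by (auto simp: left_base_def)
    then have "W \<in> S" using Wm w wA by (auto simp: S_def ball_c_def)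
    then show "V \<in> tr K0 x ` S" using Wm by blast
  qed
  have fS: "finite S" "card S \<le> m + 1" using mult a by (auto simp: S_def)
  have "finite (tr K0 x ` S)" using fS by simp
  moreover have "card (tr K0 x ` S) \<le> m + 1" using fS card_image_le[OF fS(1), of "tr K0 x"] by linarith
  ultimately show ?thesis using sub by (meson card_mono finite_subset le_trans)
qed

end


context group
begin

lemma key:
  assumes tg: "topological_group G T"
    and AG: "A \<subseteq> carrier G"
    and LG: "L \<subseteq> carrier G"
    and lL: "large (carrier G) (left_coarse G T) L"
    and nl: "\<not> large (carrier G) (left_coarse G T) (L - A)"
    and am: "asdim_le A (subspace_coarse (left_coarse G T) A) m"
  shows "asdim_le (carrier G) (left_coarse G T) m"
  unfolding asdim_le_def
proof (intro ballI)
  fix \<epsilon> assume eE: "\<epsilon> \<in> left_coarse G T"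
  define E where "E = left_coarse G T"
  have tp: "topspace T = carrier G" using tg by (simp add: topological_group_def)
  obtain \<epsilon>0 where e0: "\<epsilon>0 \<in> E" "ball_set L \<epsilon>0 = carrier G" using lL by (auto simp: large_def E_def)
  obtain K0 where K0: "K0 \<subseteq> carrier G" "compactin T K0" "(\<lambda>x. inv x) ` K0 = K0" "\<one> \<in> K0" "\<epsilon>0 \<subseteq> left_base G K0"
    using e0(1) unfolding E_def by (rule left_coarse_E)
  have cov: "\<exists>l\<in>L. \<exists>k\<in>K0. l = y \<otimes> k" if "y \<in> carrier G" for y
  proof -
    have "y \<in> ball_set L \<epsilon>0" using that e0(2) by simp
    then obtain l where "l \<in> L" "(l, y) \<in> \<epsilon>0" by (auto simp: ball_set_def ball_c_def)
    then have "(l, y) \<in> left_base G K0" using K0(5) by blast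
    then show ?thesis using \<open>l \<in> L\<close> by (auto simp: left_base_def)
  qed
  have thk: "\<exists>x\<in>carrier G. \<forall>f\<in>F. \<exists>a\<in>A. \<exists>k\<in>K0. x \<otimes> f = a \<otimes> k" if "finite F" "F \<subseteq> carrier G" for F
    by (rule thick[OF tg K0(1,2,3) cov LG nl that])
  obtain K1 where K1: "K1 \<subseteq> carrier G" "compactin T K1" "(\<lambda>x. inv x) ` K1 = K1" "\<one> \<in> K1" "\<epsilon> \<subseteq> left_base G K1"
    using eE by (rule left_coarse_E)
  define P01 where "P01 = pset G (pset G K0 K1) K0"
  have P01: "P01 \<subseteq> carrier G" "compactin T P01"
    using pset_props[OF tg pset_props[OF tg K0(1,2) K1(1,2)] K0(1,2)] unfolding P01_def by auto
  define K2 where "K2 = symc G P01"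
  have K2E: "left_base G K2 \<in> E" unfolding K2_def E_def by (rule symc_lb[OF tg P01])
  have K2s: "P01 \<subseteq> K2" unfolding K2_def using symc_props(5)[OF tg P01] .
  have "left_base G K2 \<inter> A \<times> A \<in> subspace_coarse (left_coarse G T) A" using K2E by (auto simp: subspace_coarse_def E_def)
  from am[unfolded asdim_le_def, rule_format, OF this]
  obtain \<W> where W: "\<W> \<subseteq> Pow A" "\<Union>\<W> = A" and dA: "\<exists>\<delta>\<in>subspace_coarse (left_coarse G T) A. mesh \<W> \<subseteq> \<delta>"
    and mult: "\<forall>a\<in>A. finite {W\<in>\<W>. ball_c a (left_base G K2 \<inter> A \<times> A) \<inter> W \<noteq> {}} \<and>
                 card {W\<in>\<W>. ball_c a (left_base G K2 \<inter> A \<times> A) \<inter> W \<noteq> {}} \<le> m + 1"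
    by (elim exE conjE) (rule that)
  obtain \<delta>0 where d0: "\<delta>0 \<in> E" "mesh \<W> \<subseteq> \<delta>0" using dA W(1) by (auto simp: subspace_coarse_def E_def)
  obtain D where D: "D \<subseteq> carrier G" "compactin T D" "(\<lambda>x. inv x) ` D = D" "\<one> \<in> D" "\<delta>0 \<subseteq> left_base G D"
    using d0(1) unfolding E_def by (rule left_coarse_E)
  define P02 where "P02 = pset G (pset G K0 D) K0"
  have P02: "P02 \<subseteq> carrier G" "compactin T P02"
    using pset_props[OF tg pset_props[OF tg K0(1,2) D(1,2)] K0(1,2)] unfolding P02_def by auto
  define \<delta> where "\<delta> = left_base G (symc G P02)"
  have dE: "\<delta> \<in> E" unfolding \<delta>_def E_def by (rule symc_lb[OF tg P02])
  have dsub: "left_base G P02 \<subseteq> \<delta>" unfolding \<delta>_def using symc_props(5)[OF tg P02] by (auto simp: left_base_def)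
  have meshW: "mesh \<W> \<subseteq> left_base G D" using d0 D by auto
  define X where "X F = (SOME x. x \<in> carrier G \<and> (\<forall>f\<in>F. \<exists>a\<in>A. \<exists>k\<in>K0. x \<otimes> f = a \<otimes> k))" for F
  have XF: "X F \<in> carrier G \<and> (\<forall>f\<in>F. \<exists>a\<in>A. \<exists>k\<in>K0. X F \<otimes> f = a \<otimes> k)" if "finite F" "F \<subseteq> carrier G" for F
  proof -
    have "\<exists>x. x \<in> carrier G \<and> (\<forall>f\<in>F. \<exists>a\<in>A. \<exists>k\<in>K0. x \<otimes> f = a \<otimes> k)" using thk[OF that] by blast
    then show ?thesis unfolding X_def by (rule someI_ex)
  qed
  define U where "U F = tr K0 (X F) ` \<W>" for F
  have UP1: "\<exists>V\<in>U F. f \<in> V" if FF: "finite F" "F \<subseteq> carrier G" "f \<in> F" for F f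
  proof -
    have xc: "X F \<in> carrier G" and hx: "\<forall>f\<in>F. \<exists>a\<in>A. \<exists>k\<in>K0. X F \<otimes> f = a \<otimes> k" using XF[OF FF(1,2)] by auto
    obtain W0 where "W0 \<in> \<W>" "f \<in> tr K0 (X F) W0" using P1[OF K0(1,3) W(2) AG xc hx FF(2,3)] by blast
    then show ?thesis unfolding U_def by blast
  qed
  have UP2: "(y, z) \<in> \<delta>" if F: "finite F" "F \<subseteq> carrier G" and V: "V \<in> U F" and yz: "y \<in> V" "z \<in> V" for F V y z
  proof -
    obtain W0 where W0: "W0 \<in> \<W>" "V = tr K0 (X F) W0" using V unfolding U_def by blast
    have xc: "X F \<in> carrier G" using XF[OF F] by blast
    have "(y, z) \<in> left_base G P02" unfolding P02_def
      by (rule P2[OF K0(1,3) W(1) AG xc meshW D(1) W0(1)]) (use yz W0 in auto)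
    then show ?thesis using dsub by blast
  qed
  have UP3: "finite {V\<in>U F. ball_c p \<epsilon> \<inter> V \<noteq> {}} \<and> card {V\<in>U F. ball_c p \<epsilon> \<inter> V \<noteq> {}} \<le> m + 1"
    if "finite F" "F \<subseteq> carrier G" "p \<in> F" for F p
  proof -
    have xc: "X F \<in> carrier G" and hx: "\<forall>f\<in>F. \<exists>a\<in>A. \<exists>k\<in>K0. X F \<otimes> f = a \<otimes> k" using XF[OF that(1,2)] by auto
    show ?thesis unfolding U_def
      by (rule P3[OF K0(1,3) W(1) AG xc hx that(2,3) K1(5,1) K2s[unfolded P01_def] mult])
  qed
  show "\<exists>\<U>. \<U> \<subseteq> Pow (carrier G) \<and> \<Union>\<U> = carrier G \<and> (\<exists>\<delta>\<in>left_coarse G T. mesh \<U> \<subseteq> \<delta>) \<and>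
      (\<forall>x\<in>carrier G. finite {U \<in> \<U>. ball_c x \<epsilon> \<inter> U \<noteq> {}} \<and> card {U \<in> \<U>. ball_c x \<epsilon> \<inter> U \<noteq> {}} \<le> m + 1)"
  proof -
    obtain M where M0: "\<forall>P. eventually P (finite_subsets_at_top (carrier G)) \<longrightarrow> P \<in> M"
      and fM: "fip M" and uM: "\<forall>P. P \<in> M \<or> (\<lambda>x. \<not> P x) \<in> M"
      using ultra_exists[OF finite_subsets_at_top_neq_bot[of "carrier G"]] by (elim exE conjE)
    note uex = uf_ex[OF fM uM] and uconj = uf_conj[OF fM uM] and umono = uf_mono[OF fM uM]
    have evfin: "(\<lambda>F. finite F \<and> F \<subseteq> carrier G) \<in> M"
      using M0 eventually_finite_subsets_at_top_weakI[of "carrier G" "\<lambda>F. finite F \<and> F \<subseteq> carrier G"] by blast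
    have evpt: "(\<lambda>F. finite F \<and> F \<subseteq> carrier G \<and> g \<in> F) \<in> M" if g: "g \<in> carrier G" for g
    proof -
      have "eventually (\<lambda>F. finite F \<and> F \<subseteq> carrier G \<and> g \<in> F) (finite_subsets_at_top (carrier G))"
        unfolding eventually_finite_subsets_at_top using g by (intro exI[of _ "{g}"]) auto
      then show ?thesis using M0 by blast
    qed
    define lim where "lim c = {y \<in> carrier G. (\<lambda>F. y \<in> c F) \<in> M}" for c :: "'a set \<Rightarrow> 'a set"
    define \<V> where "\<V> = {lim c | c. (\<lambda>F. c F \<in> U F) \<in> M}"
    have VG: "\<V> \<subseteq> Pow (carrier G)" by (auto simp: \<V>_def lim_def)
    have cover: "\<Union>\<V> = carrier G"
    proof
      show "\<Union>\<V> \<subseteq> carrier G" using VG by blast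
      show "carrier G \<subseteq> \<Union>\<V>"
      proof
        fix g assume g: "g \<in> carrier G"
        define c where "c F = (SOME V. V \<in> U F \<and> g \<in> V)" for F
        have "(\<lambda>F. c F \<in> U F \<and> g \<in> c F) \<in> M"
        proof (rule umono[OF evpt[OF g]])
          fix F assume "finite F \<and> F \<subseteq> carrier G \<and> g \<in> F"
          then have "\<exists>V. V \<in> U F \<and> g \<in> V" using UP1 by blast
          then show "c F \<in> U F \<and> g \<in> c F" unfolding c_def by (rule someI_ex)
        qed
        then have 1: "(\<lambda>F. c F \<in> U F) \<in> M" and 2: "(\<lambda>F. g \<in> c F) \<in> M"
          by (auto elim: umono)
        have "lim c \<in> \<V>" using 1 by (auto simp: \<V>_def)
        moreover have "g \<in> lim c" using 2 g by (simp add: lim_def)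
        ultimately show "g \<in> \<Union>\<V>" by blast
      qed
    qed
    have meshV: "mesh \<V> \<subseteq> \<delta>"
    proof
      fix q assume "q \<in> mesh \<V>"
      then obtain V y z where V: "V \<in> \<V>" "y \<in> V" "z \<in> V" "q = (y, z)" by (auto simp: mesh_def)
      then obtain c where c: "V = lim c" "(\<lambda>F. c F \<in> U F) \<in> M" by (auto simp: \<V>_def)
      have "(\<lambda>F. y \<in> c F) \<in> M" "(\<lambda>F. z \<in> c F) \<in> M" using V c by (auto simp: lim_def)
      then have "\<exists>F. ((finite F \<and> F \<subseteq> carrier G) \<and> c F \<in> U F) \<and> (y \<in> c F \<and> z \<in> c F)"
        using uex[OF uconj[OF uconj[OF evfin c(2)] uconj]] by blast
      then obtain F where "finite F" "F \<subseteq> carrier G" "c F \<in> U F" "y \<in> c F" "z \<in> c F"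
        by blast
      then show "q \<in> \<delta>" using UP2 V(4) by blast
    qed
    have distinct: "(\<lambda>F. c F \<noteq> c' F) \<in> M" if ne: "lim c \<noteq> lim c'" for c c'
    proof -
      obtain y where "y \<in> lim c \<and> y \<notin> lim c' \<or> y \<notin> lim c \<and> y \<in> lim c'"
        using ne unfolding set_eq_iff by meson
      then show ?thesis
      proof (elim disjE conjE)
        assume a: "y \<in> lim c" "y \<notin> lim c'"
        have "(\<lambda>F. y \<in> c F) \<in> M" using a by (simp add: lim_def)
        moreover have "(\<lambda>F. \<not> y \<in> c' F) \<in> M" using a uM[THEN spec, of "\<lambda>F. y \<in> c' F"] by (simp add: lim_def)
        ultimately show ?thesis by (rule umono[OF uconj]) auto
      next
        assume a: "y \<notin> lim c" "y \<in> lim c'"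
        have "(\<lambda>F. y \<in> c' F) \<in> M" using a by (simp add: lim_def)
        moreover have "(\<lambda>F. \<not> y \<in> c F) \<in> M" using a uM[THEN spec, of "\<lambda>F. y \<in> c F"] by (simp add: lim_def)
        ultimately show ?thesis by (rule umono[OF uconj]) auto
      qed
    qed
    have multV: "finite {V \<in> \<V>. ball_c p \<epsilon> \<inter> V \<noteq> {}} \<and> card {V \<in> \<V>. ball_c p \<epsilon> \<inter> V \<noteq> {}} \<le> m + 1"
      if p: "p \<in> carrier G" for p
    proof (rule ccontr)
      define S where "S = {V \<in> \<V>. ball_c p \<epsilon> \<inter> V \<noteq> {}}"
      assume nf: "\<not> (finite {V \<in> \<V>. ball_c p \<epsilon> \<inter> V \<noteq> {}} \<and> card {V \<in> \<V>. ball_c p \<epsilon> \<inter> V \<noteq> {}} \<le> m + 1)"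
      have "\<exists>S'. S' \<subseteq> S \<and> finite S' \<and> card S' = m + 2"
      proof (cases "finite S")
        case False
        then show ?thesis using infinite_arbitrarily_large[OF False, of "m + 2"] by blast
      next
        case True
        then have "m + 2 \<le> card S" using nf unfolding S_def by simp
        then obtain S' where "S' \<subseteq> S" "card S' = m + 2" "finite S'" by (rule obtain_subset_with_card_n)
        then show ?thesis by blast
      qed
      then obtain S' where S': "S' \<subseteq> S" "finite S'" "card S' = m + 2" by blast
      have "\<forall>V\<in>S'. \<exists>cy. V = lim (fst cy) \<and> (\<lambda>F. fst cy F \<in> U F) \<in> M \<and> snd cy \<in> ball_c p \<epsilon> \<and> snd cy \<in> V"
      proof
        fix V assume "V \<in> S'"
        then have V: "V \<in> \<V>" "ball_c p \<epsilon> \<inter> V \<noteq> {}" using S' unfolding S_def by auto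
        obtain c where c: "V = lim c" "(\<lambda>F. c F \<in> U F) \<in> M" using V(1) by (auto simp: \<V>_def)
        obtain y where y: "y \<in> ball_c p \<epsilon>" "y \<in> V" using V(2) by blast
        show "\<exists>cy. V = lim (fst cy) \<and> (\<lambda>F. fst cy F \<in> U F) \<in> M \<and> snd cy \<in> ball_c p \<epsilon> \<and> snd cy \<in> V"
          using c y by (intro exI[of _ "(c, y)"]) simp
      qed
      from bchoice[OF this] obtain cy where cy0: "\<forall>V\<in>S'. V = lim (fst (cy V)) \<and> (\<lambda>F. fst (cy V) F \<in> U F) \<in> M \<and> snd (cy V) \<in> ball_c p \<epsilon> \<and> snd (cy V) \<in> V"
        by (elim exE)
      have cy: "V = lim (fst (cy V)) \<and> (\<lambda>F. fst (cy V) F \<in> U F) \<in> M \<and> snd (cy V) \<in> ball_c p \<epsilon> \<and> snd (cy V) \<in> V" if "V \<in> S'" for V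
        using cy0 that by (rule bspec)
      define cc where "cc V = fst (cy V)" for V
      define yy where "yy V = snd (cy V)" for V
      have ccV: "V = lim (cc V)" "(\<lambda>F. cc V F \<in> U F) \<in> M" "yy V \<in> ball_c p \<epsilon>" "yy V \<in> V" if "V \<in> S'" for V
        using cy[OF that] unfolding cc_def yy_def by auto
      have Q1: "(\<lambda>F. \<forall>V\<in>S'. cc V F \<in> U F \<and> yy V \<in> cc V F) \<in> M"
      proof (rule uf_ball_finite[OF fM uM S'(2)])
        fix V assume V: "V \<in> S'"
        have "yy V \<in> lim (cc V)" using ccV(1,4)[OF V] by simp
        then have "(\<lambda>F. yy V \<in> cc V F) \<in> M" unfolding lim_def by simp
        then show "(\<lambda>F. cc V F \<in> U F \<and> yy V \<in> cc V F) \<in> M" by (rule uconj[OF ccV(2)[OF V]])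
      qed
      have Q2: "(\<lambda>F. \<forall>V\<in>S'. \<forall>V'\<in>S'. V \<noteq> V' \<longrightarrow> cc V F \<noteq> cc V' F) \<in> M"
      proof (rule uf_ball_finite[OF fM uM S'(2)])
        fix V assume V: "V \<in> S'"
        show "(\<lambda>F. \<forall>V'\<in>S'. V \<noteq> V' \<longrightarrow> cc V F \<noteq> cc V' F) \<in> M"
        proof (rule uf_ball_finite[OF fM uM S'(2)])
          fix V' assume V': "V' \<in> S'"
          show "(\<lambda>F. V \<noteq> V' \<longrightarrow> cc V F \<noteq> cc V' F) \<in> M"
          proof (cases "V = V'")
            case True
            then show ?thesis using uf_True[OF fM uM] by simp
          next
            case False
            then have "lim (cc V) \<noteq> lim (cc V')" using ccV(1)[OF V] ccV(1)[OF V'] by metis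
            then have "(\<lambda>F. cc V F \<noteq> cc V' F) \<in> M" by (rule distinct)
            then show ?thesis by (rule umono) simp
          qed
        qed
      qed
      have "\<exists>F. (finite F \<and> F \<subseteq> carrier G \<and> p \<in> F) \<and> ((\<forall>V\<in>S'. cc V F \<in> U F \<and> yy V \<in> cc V F) \<and>
                 (\<forall>V\<in>S'. \<forall>V'\<in>S'. V \<noteq> V' \<longrightarrow> cc V F \<noteq> cc V' F))"
        by (rule uex[OF uconj[OF evpt[OF p] uconj[OF Q1 Q2]]])
      then obtain F where FF: "(finite F \<and> F \<subseteq> carrier G \<and> p \<in> F) \<and> ((\<forall>V\<in>S'. cc V F \<in> U F \<and> yy V \<in> cc V F) \<and>
                 (\<forall>V\<in>S'. \<forall>V'\<in>S'. V \<noteq> V' \<longrightarrow> cc V F \<noteq> cc V' F))" by (rule exE)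
      have F: "finite F" "F \<subseteq> carrier G" "p \<in> F" using FF by simp_all
      have F1: "\<forall>V\<in>S'. cc V F \<in> U F \<and> yy V \<in> cc V F" using FF by (rule conjunct1[OF conjunct2])
      have F2: "\<forall>V\<in>S'. \<forall>V'\<in>S'. V \<noteq> V' \<longrightarrow> cc V F \<noteq> cc V' F" using FF by (rule conjunct2[OF conjunct2])
      have inj: "inj_on (\<lambda>V. cc V F) S'" using F2 unfolding inj_on_def by blast
      have sub: "(\<lambda>V. cc V F) ` S' \<subseteq> {V\<in>U F. ball_c p \<epsilon> \<inter> V \<noteq> {}}"
      proof
        fix Z assume "Z \<in> (\<lambda>V. cc V F) ` S'"
        then obtain V where V: "V \<in> S'" "Z = cc V F" by blast
        have "yy V \<in> ball_c p \<epsilon>" using ccV(3)[OF V(1)] .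
        then show "Z \<in> {V\<in>U F. ball_c p \<epsilon> \<inter> V \<noteq> {}}" using F1 V by blast
      qed
      have u3: "finite {V\<in>U F. ball_c p \<epsilon> \<inter> V \<noteq> {}}" "card {V\<in>U F. ball_c p \<epsilon> \<inter> V \<noteq> {}} \<le> m + 1"
        using UP3[OF F] by auto
      have "card ((\<lambda>V. cc V F) ` S') = m + 2" using card_image[OF inj] S'(3) by simp
      moreover have "card ((\<lambda>V. cc V F) ` S') \<le> m + 1" using card_mono[OF u3(1) sub] u3(2) by linarith
      ultimately show False by simp
    qed
    have "\<exists>\<delta>\<in>left_coarse G T. mesh \<V> \<subseteq> \<delta>" using meshV dE unfolding E_def by (rule_tac bexI) 
    then show ?thesis using VG cover multV by (intro exI[of _ \<V>]) simp
  qed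
qed

end


lemma asdim_le_bound: "asdim_le X E m \<Longrightarrow> asdim X E \<le> enat m"
  unfolding asdim_def by (auto intro: Least_le)

lemma asdim_finite:
  assumes "asdim X E < b"
  obtains m where "asdim_le X E m" "asdim X E = enat m"
proof -
  have "\<exists>n. asdim_le X E n"
  proof (rule ccontr)
    assume "\<not> (\<exists>n. asdim_le X E n)"
    then have "asdim X E = \<infinity>" by (simp add: asdim_def)
    then show False using assms by simp
  qed
  then have "asdim_le X E (LEAST n. asdim_le X E n)" by (rule LeastI_ex)
  moreover have "asdim X E = enat (LEAST n. asdim_le X E n)" using \<open>\<exists>n. asdim_le X E n\<close> by (simp add: asdim_def)
  ultimately show ?thesis by (rule that)
qed

theorem theorem1p6:
  fixes G :: "('a, 'b) monoid_scheme" and T :: "'a topology"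
  assumes "topological_group G T"
  shows "lower_dim_sets (carrier G) (left_coarse G T) \<subseteq> small_sets (carrier G) (left_coarse G T)"
proof
  fix A assume A: "A \<in> lower_dim_sets (carrier G) (left_coarse G T)"
  have grp: "group G" using assms by (simp add: topological_group_def)
  have AG: "A \<subseteq> carrier G" and lt: "asdim A (subspace_coarse (left_coarse G T) A) < asdim (carrier G) (left_coarse G T)"
    using A by (auto simp: lower_dim_sets_def)
  obtain m where am: "asdim_le A (subspace_coarse (left_coarse G T) A) m"
    and aeq: "asdim A (subspace_coarse (left_coarse G T) A) = enat m"
    using lt by (rule asdim_finite)
  have "large (carrier G) (left_coarse G T) (L - A)"
    if LG: "L \<subseteq> carrier G" and lL: "large (carrier G) (left_coarse G T) L" for L
  proof (rule ccontr)
    assume nl: "\<not> large (carrier G) (left_coarse G T) (L - A)"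
    have "asdim_le (carrier G) (left_coarse G T) m"
      by (rule group.key[OF grp assms AG LG lL nl am])
    then have "asdim (carrier G) (left_coarse G T) \<le> enat m" by (rule asdim_le_bound)
    then show False using lt aeq by simp
  qed
  then show "A \<in> small_sets (carrier G) (left_coarse G T)" using AG by (auto simp: small_sets_def)
qed


end
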